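(* Let $m,n\ge 2$ and $\mathcal{A}=(a_{i_1j_1i_2j_2})\in NBQ(m,n)$. Then $$\rho^*=\lambda_{\max}(\mathcal{A})=\rho_M(\mathcal{A}),$$ and the supremum defining $\rho^*$ is attained.
   Context: A biquadratic tensor is $\mathcal{A}=(a_{i_1j_1i_2j_2})\in\mathbb{R}^{m\times n\times m\times n}$ (indices $i_1,i_2\in[m]=\{1,\dots,m\}$, $j_1,j_2\in[n]$); $NBQ(m,n)$ denotes the set of entrywise nonnegative ones. M-eigenvalues: a real number $\lambda$ is an M-eigenvalue of $\mathcal{A}$ if there are $\mathbf{x}\in\mathbb{R}^m$, $\mathbf{y}\in\mathbb{R}^n$ with $\mathbf{x}^\top\mathbf{x}=\mathbf{y}^\top\mathbf{y}=1$, $\mathbf{g}=\lambda\mathbf{x}$ and $\mathbf{h}=\lambda\mathbf{y}$, where $\mathbf{g}\in\mathbb{R}^m,\mathbf{h}\in\mathbb{R}^n$ are given by $g_i=\tfrac12\Big(\sum_{i_1=1}^m\sum_{j_1,j_2=1}^n a_{i_1j_1ij_2}x_{i_1}y_{j_1}y_{j_2}+\sum_{i_2=1}^m\sum_{j_1,j_2=1}^n a_{ij_1i_2j_2}y_{j_1}x_{i_2}y_{j_2}\Big)$, $h_j=\tfrac12\Big(\sum_{i_1,i_2=1}^m\sum_{j_1=1}^n a_{i_1j_1i_2j}x_{i_1}y_{j_1}x_{i_2}+\sum_{i_1,i_2=1}^m\sum_{j_2=1}^n a_{i_1ji_2j_2}x_{i_1}x_{i_2}y_{j_2}\Big)$.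 $\lambda_{\max}(\mathcal{A})$ is the largest M-eigenvalue, equivalently $\max\{\sum a_{i_1j_1i_2j_2}x_{i_1}y_{j_1}x_{i_2}y_{j_2}:\mathbf{x}^\top\mathbf{x}=\mathbf{y}^\top\mathbf{y}=1\}$, and $\rho_M(\mathcal{A})$ is the largest absolute value of an M-eigenvalue of $\mathcal{A}$. Let $S_+^{m-1}=\{\mathbf{x}\in\mathbb{R}^m_+:\sum_i x_i^2=1\}$. For nonzero $\mathbf{x}\in\mathbb{R}^m_+$, $\mathbf{y}\in\mathbb{R}^n_+$, with $\mathbf{g},\mathbf{h}$ defined by the formulas above (as functions of $\mathbf{x},\mathbf{y}$), set $v(\mathbf{x},\mathbf{y})=\min\big\{\{g_i/x_i: x_i>0\}\cup\{h_j/y_j: y_j>0\}\big\}$, and $\rho^*=\sup_{\mathbf{x}\in S_+^{m-1},\,\mathbf{y}\in S_+^{n-1}} v(\mathbf{x},\mathbf{y})$. *)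

theory Defs
  imports Complex_Main "HOL-Library.Cardinality"
begin

text \<open>A biquadratic tensor of size m x n x m x n is a function on index types
  'm, 'n (finite types with CARD('m) = m, CARD('n) = n).\<close>

type_synonym ('m, 'n) bqtensor = "'m \<Rightarrow> 'n \<Rightarrow> 'm \<Rightarrow> 'n \<Rightarrow> real"

definition nonneg_bq :: "('m::finite, 'n::finite) bqtensor \<Rightarrow> bool" where
  "nonneg_bq A \<longleftrightarrow> (\<forall>i1 j1 i2 j2. A i1 j1 i2 j2 \<ge> 0)"

definition bq_g :: "('m::finite, 'n::finite) bqtensor \<Rightarrow> ('m \<Rightarrow> real) \<Rightarrow> ('n \<Rightarrow> real) \<Rightarrow> 'm \<Rightarrow> real" where
  "bq_g A x y i = (1/2) *
     ((\<Sum>i1\<in>UNIV. \<Sum>j1\<in>UNIV. \<Sum>j2\<in>UNIV. A i1 j1 i j2 * x i1 * y j1 * y j2)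
    + (\<Sum>i2\<in>UNIV. \<Sum>j1\<in>UNIV. \<Sum>j2\<in>UNIV. A i j1 i2 j2 * y j1 * x i2 * y j2))"

definition bq_h :: "('m::finite, 'n::finite) bqtensor \<Rightarrow> ('m \<Rightarrow> real) \<Rightarrow> ('n \<Rightarrow> real) \<Rightarrow> 'n \<Rightarrow> real" where
  "bq_h A x y j = (1/2) *
     ((\<Sum>i1\<in>UNIV. \<Sum>i2\<in>UNIV. \<Sum>j1\<in>UNIV. A i1 j1 i2 j * x i1 * y j1 * x i2)
    + (\<Sum>i1\<in>UNIV. \<Sum>i2\<in>UNIV. \<Sum>j2\<in>UNIV. A i1 j i2 j2 * x i1 * x i2 * y j2))"

definition is_M_eigenvalue :: "('m::finite, 'n::finite) bqtensor \<Rightarrow> real \<Rightarrow> bool" where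
  "is_M_eigenvalue A l \<longleftrightarrow>
     (\<exists>x y. (\<Sum>i\<in>UNIV. (x i)\<^sup>2) = 1 \<and> (\<Sum>j\<in>UNIV. (y j)\<^sup>2) = 1 \<and>
            (\<forall>i. bq_g A x y i = l * x i) \<and> (\<forall>j. bq_h A x y j = l * y j))"

definition lambda_max :: "('m::finite, 'n::finite) bqtensor \<Rightarrow> real" where
  "lambda_max A = (GREATEST l. is_M_eigenvalue A l)"

definition rho_M :: "('m::finite, 'n::finite) bqtensor \<Rightarrow> real" where
  "rho_M A = (GREATEST r. \<exists>l. is_M_eigenvalue A l \<and> r = \<bar>l\<bar>)"

definition sphere_plus :: "('a::finite \<Rightarrow> real) set" where
  "sphere_plus = {x. (\<forall>i. x i \<ge> 0) \<and> (\<Sum>i\<in>UNIV. (x i)\<^sup>2) = 1}"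

definition v_fun :: "('m::finite, 'n::finite) bqtensor \<Rightarrow> ('m \<Rightarrow> real) \<Rightarrow> ('n \<Rightarrow> real) \<Rightarrow> real" where
  "v_fun A x y = Min ({bq_g A x y i / x i | i. x i > 0} \<union> {bq_h A x y j / y j | j. y j > 0})"

definition rho_star :: "('m::finite, 'n::finite) bqtensor \<Rightarrow> real" where
  "rho_star A = (SUP p \<in> sphere_plus \<times> sphere_plus. v_fun A (fst p) (snd p))"

end

theory Submission
  imports Defs "HOL-Analysis.Analysis"
begin

definition T :: "('m::finite, 'n::finite) bqtensor \<Rightarrow> ('m\<Rightarrow>real) \<Rightarrow> ('n\<Rightarrow>real) \<Rightarrow> ('m\<Rightarrow>real) \<Rightarrow> ('n\<Rightarrow>real) \<Rightarrow> real" where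
 "T A u v w z = (\<Sum>i1\<in>UNIV. \<Sum>j1\<in>UNIV. \<Sum>i2\<in>UNIV. \<Sum>j2\<in>UNIV. A i1 j1 i2 j2 * u i1 * v j1 * w i2 * z j2)"

lemma T_lin1: "T A (\<lambda>k. u k + t * u' k) v w z = T A u v w z + t * T A u' v w z"
  unfolding T_def by (simp add: algebra_simps sum.distrib sum_distrib_left)
lemma T_lin2: "T A u (\<lambda>k. v k + t * v' k) w z = T A u v w z + t * T A u v' w z"
  unfolding T_def by (simp add: algebra_simps sum.distrib sum_distrib_left)
lemma T_lin3: "T A u v (\<lambda>k. w k + t * w' k) z = T A u v w z + t * T A u v w' z"
  unfolding T_def by (simp add: algebra_simps sum.distrib sum_distrib_left)
lemma T_lin4: "T A u v w (\<lambda>k. z k + t * z' k) = T A u v w z + t * T A u v w z'"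
  unfolding T_def by (simp add: algebra_simps sum.distrib sum_distrib_left)
lemma T_sc1: "T A (\<lambda>k. t * u k) v w z = t * T A u v w z"
  unfolding T_def by (simp add: algebra_simps sum_distrib_left)
lemma T_sc2: "T A u (\<lambda>k. t * v k) w z = t * T A u v w z"
  unfolding T_def by (simp add: algebra_simps sum_distrib_left)
lemma T_sc3: "T A u v (\<lambda>k. t * w k) z = t * T A u v w z"
  unfolding T_def by (simp add: algebra_simps sum_distrib_left)
lemma T_sc4: "T A u v w (\<lambda>k. t * z k) = t * T A u v w z"
  unfolding T_def by (simp add: algebra_simps sum_distrib_left)

lemma sw3: "(\<Sum>a\<in>A. \<Sum>b\<in>B. \<Sum>c\<in>C. f a b c) = (\<Sum>b\<in>B. \<Sum>c\<in>C. \<Sum>a\<in>A. (f a b c::real))"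
  by (subst sum.swap, rule sum.cong, simp, rule sum.swap)
lemma sw4: "(\<Sum>a\<in>A. \<Sum>b\<in>B. \<Sum>c\<in>C. \<Sum>d\<in>D. f a b c d) = (\<Sum>b\<in>B. \<Sum>c\<in>C. \<Sum>d\<in>D. \<Sum>a\<in>A. (f a b c d::real))"
  by (subst sum.swap, rule sum.cong, simp, rule sw3)

lemma sum_g: "(\<Sum>i\<in>UNIV. d i * bq_g A x y i) = (T A d y x y + T A x y d y)/2"
proof -
  have 1: "(\<Sum>i\<in>UNIV. d i * (\<Sum>i1\<in>UNIV. \<Sum>j1\<in>UNIV. \<Sum>j2\<in>UNIV. A i1 j1 i j2 * x i1 * y j1 * y j2))
     = (\<Sum>i1\<in>UNIV. \<Sum>j1\<in>UNIV. \<Sum>j2\<in>UNIV. \<Sum>i\<in>UNIV. d i * (A i1 j1 i j2 * x i1 * y j1 * y j2))"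
    by (simp only: sum_distrib_left, rule sw4)
  also have "\<dots> = T A x y d y"
    unfolding T_def
    apply (rule sum.cong[OF refl])+
    apply (rule trans[OF sum.swap])
    by (simp add: algebra_simps)
  finally have 1: "(\<Sum>i\<in>UNIV. d i * (\<Sum>i1\<in>UNIV. \<Sum>j1\<in>UNIV. \<Sum>j2\<in>UNIV. A i1 j1 i j2 * x i1 * y j1 * y j2)) = T A x y d y" .
  have 2: "(\<Sum>i\<in>UNIV. d i * (\<Sum>i2\<in>UNIV. \<Sum>j1\<in>UNIV. \<Sum>j2\<in>UNIV. A i j1 i2 j2 * y j1 * x i2 * y j2)) = T A d y x y"
    unfolding T_def sum_distrib_left
    apply (rule sum.cong[OF refl])
    apply (rule trans[OF sum.swap])
    by (simp add: algebra_simps)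
  show ?thesis unfolding bq_g_def using 1 2
    by (simp add: algebra_simps sum.distrib sum_distrib_left sum_divide_distrib)
qed

lemma sum_h: "(\<Sum>j\<in>UNIV. e j * bq_h A x y j) = (T A x y x e + T A x e x y)/2"
proof -
  have "(\<Sum>j\<in>UNIV. e j * (\<Sum>i1\<in>UNIV. \<Sum>i2\<in>UNIV. \<Sum>j1\<in>UNIV. A i1 j1 i2 j * x i1 * y j1 * x i2))
      = (\<Sum>i1\<in>UNIV. \<Sum>i2\<in>UNIV. \<Sum>j1\<in>UNIV. \<Sum>j\<in>UNIV. e j * (A i1 j1 i2 j * x i1 * y j1 * x i2))"
    by (simp only: sum_distrib_left, rule sw4)
  also have "\<dots> = T A x y x e"
    unfolding T_def
    apply (rule sum.cong[OF refl])
    apply (rule trans[OF sum.swap])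
    by (simp add: algebra_simps)
  finally have 1: "(\<Sum>j\<in>UNIV. e j * (\<Sum>i1\<in>UNIV. \<Sum>i2\<in>UNIV. \<Sum>j1\<in>UNIV. A i1 j1 i2 j * x i1 * y j1 * x i2)) = T A x y x e" .
  have 2: "(\<Sum>j\<in>UNIV. e j * (\<Sum>i1\<in>UNIV. \<Sum>i2\<in>UNIV. \<Sum>j2\<in>UNIV. A i1 j i2 j2 * x i1 * x i2 * y j2)) = T A x e x y"
    unfolding T_def sum_distrib_left
    apply (rule trans[OF sum.swap])
    by (simp add: algebra_simps)
  show ?thesis unfolding bq_h_def using 1 2
    by (simp add: algebra_simps sum.distrib sum_distrib_left sum_divide_distrib)
qed

lemma abs_sum_mono: assumes "(\<And>k. \<bar>f k\<bar> \<le> (g k::real))" shows "\<bar>sum f S\<bar> \<le> sum g S"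
proof -
  have "sum (\<lambda>k. \<bar>f k\<bar>) S \<le> sum g S" by (rule sum_mono) (use assms in auto)
  thus ?thesis using sum_abs[of f S] by linarith
qed

lemma T_abs: assumes "nonneg_bq A"
  shows "\<bar>T A u v w z\<bar> \<le> T A (\<lambda>k. \<bar>u k\<bar>) (\<lambda>k. \<bar>v k\<bar>) (\<lambda>k. \<bar>w k\<bar>) (\<lambda>k. \<bar>z k\<bar>)"
  unfolding T_def
  apply (intro abs_sum_mono)
  using assms unfolding nonneg_bq_def by (simp add: abs_mult)


definition U :: "('a::finite \<Rightarrow> real) set" where "U = {x. (\<Sum>i\<in>UNIV. (x i)\<^sup>2) = 1}"

lemma norm_vec_sq: "(norm (v::real^'a))\<^sup>2 = (\<Sum>i\<in>UNIV. (v$i)\<^sup>2)"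
  unfolding norm_vec_def L2_set_def by (simp add: sum_nonneg)

lemma vec_in_U: "v \<in> sphere (0::real^'a) 1 \<Longrightarrow> vec_nth v \<in> U"
  using norm_vec_sq[of v] by (simp add: U_def)

lemma U_in_sphere: "x \<in> U \<Longrightarrow> vec_lambda x \<in> sphere (0::real^'a) 1"
proof -
  assume "x \<in> U"
  hence "(norm (vec_lambda x :: real^'a))\<^sup>2 = 1" using norm_vec_sq[of "vec_lambda x"] by (simp add: U_def)
  thus ?thesis using norm_ge_zero[of "vec_lambda x :: real^'a"] by (simp add: power2_eq_1_iff)
qed

lemma exists_max:
  fixes A :: "('m::finite, 'n::finite) bqtensor"
  shows "\<exists>x0\<in>U. \<exists>y0\<in>U. \<forall>x\<in>U. \<forall>y\<in>U. T A x y x y \<le> T A x0 y0 x0 y0"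
proof -
  define S where "S = sphere (0::real^'m) 1 \<times> sphere (0::real^'n) 1"
  define G where "G p = T A (vec_nth (fst p)) (vec_nth (snd p)) (vec_nth (fst p)) (vec_nth (snd p))" for p
  have "compact S" unfolding S_def by (intro compact_Times compact_sphere)
  moreover have "S \<noteq> {}" unfolding S_def by simp
  moreover have "continuous_on S G" unfolding G_def T_def by (intro continuous_intros)
  ultimately obtain p where p: "p \<in> S" "\<And>q. q \<in> S \<Longrightarrow> G q \<le> G p"
    using continuous_attains_sup[of S G] by metis
  show ?thesis
  proof (intro bexI ballI)
    fix x :: "'m \<Rightarrow> real" and y :: "'n \<Rightarrow> real" assume "x \<in> U" "y \<in> U"
    hence "(vec_lambda x, vec_lambda y) \<in> S" unfolding S_def using U_in_sphere[OF \<open>x \<in> U\<close>] U_in_sphere[OF \<open>y \<in> U\<close>] by auto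
    from p(2)[OF this] show "T A x y x y \<le> T A (vec_nth (fst p)) (vec_nth (snd p)) (vec_nth (fst p)) (vec_nth (snd p))"
      by (simp add: G_def vec_lambda_inverse)
  qed (use p(1) vec_in_U S_def in auto)
qed

lemma crit: assumes "\<And>t::real. a * t + b * t\<^sup>2 \<le> 0" shows "a = 0"
proof (rule ccontr)
  assume "a \<noteq> 0"
  define r where "r = 1 / (\<bar>b\<bar> + 1)"
  have r0: "r > 0" unfolding r_def by simp
  have "\<bar>b\<bar> * r < 1" unfolding r_def by (simp add: divide_less_eq)
  moreover have "b * r \<ge> - \<bar>b\<bar> * r" using mult_right_mono[of "-\<bar>b\<bar>" b r] r0 by simp
  ultimately have p: "1 + b * r > 0" by linarith
  have e: "a * (a * r) + b * (a * r)\<^sup>2 = a\<^sup>2 * r * (1 + b * r)" by (simp add: power2_eq_square algebra_simps)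
  have "a\<^sup>2 * r * (1 + b * r) > 0" using \<open>a \<noteq> 0\<close> r0 p by simp
  thus False using assms[of "a * r"] e by simp
qed


lemma sumsq_zero: "(\<Sum>i\<in>UNIV. ((x::'a::finite\<Rightarrow>real) i)\<^sup>2) = (0::real) \<Longrightarrow> x = (\<lambda>_. 0)"
proof -
  assume "(\<Sum>i\<in>UNIV. (x i)\<^sup>2) = (0::real)"
  hence "\<forall>i\<in>UNIV. (x i)\<^sup>2 = 0" using sum_nonneg_eq_0_iff[of UNIV "\<lambda>i. (x i)\<^sup>2"] by simp
  thus ?thesis by auto
qed

lemma hom_x:
  assumes M: "\<forall>x\<in>U. \<forall>y\<in>U. T A x y x y \<le> L" and y: "y \<in> U"
  shows "T A x y x y \<le> L * (\<Sum>i\<in>UNIV. (x i)\<^sup>2)"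
proof (cases "(\<Sum>i\<in>UNIV. (x i)\<^sup>2) = 0")
  case True
  hence "x = (\<lambda>_. 0)" by (rule sumsq_zero)
  thus ?thesis using True by (simp add: T_def)
next
  case False
  define s where "s = (\<Sum>i\<in>UNIV. (x i)\<^sup>2)"
  have s0: "s > 0" using False unfolding s_def by (metis less_eq_real_def sum_nonneg zero_le_power2)
  define c where "c = sqrt s"
  have c0: "c > 0" using s0 c_def by simp
  have cc: "c * c = s" using s0 c_def by simp
  define x' where "x' = (\<lambda>k. (1/c) * x k)"
  have "(\<Sum>i\<in>UNIV. (x' i)\<^sup>2) = s / (c*c)"
    unfolding x'_def s_def by (simp add: power2_eq_square sum_divide_distrib)
  hence "x' \<in> U" using cc s0 by (simp add: U_def)
  hence le: "T A x' y x' y \<le> L" using M y by blast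
  have "T A x' y x' y = (1/c) * (1/c) * T A x y x y" unfolding x'_def by (simp only: T_sc1 T_sc3 mult.assoc)
  hence "T A x y x y = s * T A x' y x' y" using c0 cc s0 by (simp add: field_simps)
  also have "\<dots> \<le> s * L" using le s0 by simp
  finally show ?thesis unfolding s_def by (simp add: mult.commute)
qed

lemma hom_y:
  assumes M: "\<forall>x\<in>U. \<forall>y\<in>U. T A x y x y \<le> L" and x: "x \<in> U"
  shows "T A x y x y \<le> L * (\<Sum>i\<in>UNIV. (y i)\<^sup>2)"
proof (cases "(\<Sum>i\<in>UNIV. (y i)\<^sup>2) = 0")
  case True
  hence "y = (\<lambda>_. 0)" by (rule sumsq_zero)
  thus ?thesis using True by (simp add: T_def)
next
  case False
  define s where "s = (\<Sum>i\<in>UNIV. (y i)\<^sup>2)"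
  have s0: "s > 0" using False unfolding s_def by (metis less_eq_real_def sum_nonneg zero_le_power2)
  define c where "c = sqrt s"
  have c0: "c > 0" using s0 c_def by simp
  have cc: "c * c = s" using s0 c_def by simp
  define y' where "y' = (\<lambda>k. (1/c) * y k)"
  have "(\<Sum>i\<in>UNIV. (y' i)\<^sup>2) = s / (c*c)"
    unfolding y'_def s_def by (simp add: power2_eq_square sum_divide_distrib)
  hence "y' \<in> U" using cc s0 by (simp add: U_def)
  hence le: "T A x y' x y' \<le> L" using M x by blast
  have "T A x y' x y' = (1/c) * (1/c) * T A x y x y" unfolding y'_def by (simp only: T_sc2 T_sc4 mult.assoc)
  hence "T A x y x y = s * T A x y' x y'" using c0 cc s0 by (simp add: field_simps)
  also have "\<dots> \<le> s * L" using le s0 by simp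
  finally show ?thesis unfolding s_def by (simp add: mult.commute)
qed

lemma dir_x:
  assumes M: "\<And>x'. T A x' y x' y \<le> L * (\<Sum>i\<in>UNIV. (x' i)\<^sup>2)" and x: "x \<in> U" and E: "T A x y x y = L"
  shows "T A d y x y + T A x y d y = 2 * L * (\<Sum>k\<in>UNIV. x k * d k)"
proof -
  have "(T A d y x y + T A x y d y - 2 * L * (\<Sum>k\<in>UNIV. x k * d k)) = 0"
  proof (rule crit)
    fix t :: real
    have "T A (\<lambda>k. x k + t * d k) y (\<lambda>k. x k + t * d k) y = L + t * (T A d y x y + T A x y d y) + t\<^sup>2 * T A d y d y"
      using E by (simp add: T_lin1 T_lin3 power2_eq_square algebra_simps)
    moreover have "(\<Sum>k\<in>UNIV. (x k + t * d k)\<^sup>2) = 1 + 2 * t * (\<Sum>k\<in>UNIV. x k * d k) + t\<^sup>2 * (\<Sum>k\<in>UNIV. (d k)\<^sup>2)"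
      using x unfolding U_def by (simp add: power2_eq_square algebra_simps sum.distrib sum_distrib_left)
    ultimately show "(T A d y x y + T A x y d y - 2 * L * (\<Sum>k\<in>UNIV. x k * d k)) * t + (T A d y d y - L * (\<Sum>k\<in>UNIV. (d k)\<^sup>2)) * t\<^sup>2 \<le> 0"
      using M[of "\<lambda>k. x k + t * d k"] by (simp add: algebra_simps)
  qed
  thus ?thesis by simp
qed

lemma dir_y:
  assumes M: "\<And>y'. T A x y' x y' \<le> L * (\<Sum>i\<in>UNIV. (y' i)\<^sup>2)" and y: "y \<in> U" and E: "T A x y x y = L"
  shows "T A x y x d + T A x d x y = 2 * L * (\<Sum>k\<in>UNIV. y k * d k)"
proof -
  have "(T A x y x d + T A x d x y - 2 * L * (\<Sum>k\<in>UNIV. y k * d k)) = 0"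
  proof (rule crit)
    fix t :: real
    have "T A x (\<lambda>k. y k + t * d k) x (\<lambda>k. y k + t * d k) = L + t * (T A x y x d + T A x d x y) + t\<^sup>2 * T A x d x d"
      using E by (simp add: T_lin2 T_lin4 power2_eq_square algebra_simps)
    moreover have "(\<Sum>k\<in>UNIV. (y k + t * d k)\<^sup>2) = 1 + 2 * t * (\<Sum>k\<in>UNIV. y k * d k) + t\<^sup>2 * (\<Sum>k\<in>UNIV. (d k)\<^sup>2)"
      using y unfolding U_def by (simp add: power2_eq_square algebra_simps sum.distrib sum_distrib_left)
    ultimately show "(T A x y x d + T A x d x y - 2 * L * (\<Sum>k\<in>UNIV. y k * d k)) * t + (T A x d x d - L * (\<Sum>k\<in>UNIV. (d k)\<^sup>2)) * t\<^sup>2 \<le> 0"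
      using M[of "\<lambda>k. y k + t * d k"] by (simp add: algebra_simps)
  qed
  thus ?thesis by simp
qed

lemma sum_delta_mult: "(\<Sum>k\<in>UNIV. (if k = (i::'a::finite) then 1 else 0) * f k) = (f i::real)"
proof -
  have "(\<Sum>k\<in>UNIV. (if k = i then 1 else 0) * f k) = (\<Sum>k\<in>UNIV. if k = i then f k else 0)"
    by (rule sum.cong) auto
  thus ?thesis by (simp add: sum.delta)
qed

lemma eig_g:
  assumes M: "\<And>x'. T A x' y x' y \<le> L * (\<Sum>i\<in>UNIV. (x' i)\<^sup>2)" and x: "x \<in> U" and E: "T A x y x y = L"
  shows "bq_g A x y i = L * x i"
proof -
  define d where "d = (\<lambda>k. if k = i then 1 else (0::real))"
  have "bq_g A x y i = (\<Sum>k\<in>UNIV. d k * bq_g A x y k)" unfolding d_def by (simp add: sum_delta_mult)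
  also have "\<dots> = (T A d y x y + T A x y d y)/2" by (rule sum_g)
  also have "\<dots> = L * (\<Sum>k\<in>UNIV. x k * d k)" using dir_x[OF M x E, of d] by simp
  also have "(\<Sum>k\<in>UNIV. x k * d k) = x i" unfolding d_def using sum_delta_mult[of i x] by (simp add: mult.commute)
  finally show ?thesis .
qed

lemma eig_h:
  assumes M: "\<And>y'. T A x y' x y' \<le> L * (\<Sum>i\<in>UNIV. (y' i)\<^sup>2)" and y: "y \<in> U" and E: "T A x y x y = L"
  shows "bq_h A x y j = L * y j"
proof -
  define d where "d = (\<lambda>k. if k = j then 1 else (0::real))"
  have "bq_h A x y j = (\<Sum>k\<in>UNIV. d k * bq_h A x y k)" unfolding d_def by (simp add: sum_delta_mult)
  also have "\<dots> = (T A x y x d + T A x d x y)/2" by (rule sum_h)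
  also have "\<dots> = L * (\<Sum>k\<in>UNIV. y k * d k)" using dir_y[OF M y E, of d] by simp
  also have "(\<Sum>k\<in>UNIV. y k * d k) = y j" unfolding d_def using sum_delta_mult[of j y] by (simp add: mult.commute)
  finally show ?thesis .
qed


lemma xgx: "(\<Sum>i\<in>UNIV. x i * bq_g A x y i) = T A x y x y"
  using sum_g[of x A x y] by simp

lemma sphere_plus_U: "sphere_plus \<subseteq> U"
  unfolding sphere_plus_def U_def by auto

lemma abs_U: "x \<in> U \<Longrightarrow> (\<lambda>k. \<bar>x k\<bar>) \<in> U"
  unfolding U_def by simp

lemma v_le:
  assumes x: "x \<in> sphere_plus" and y: "y \<in> sphere_plus"
  shows "v_fun A x y \<le> T A x y x y"
proof -
  define S where "S = {bq_g A x y i / x i | i. x i > 0} \<union> {bq_h A x y j / y j | j. y j > 0}"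
  have fin: "finite S"
    by (rule finite_subset[of _ "range (\<lambda>i. bq_g A x y i / x i) \<union> range (\<lambda>j. bq_h A x y j / y j)"]) (auto simp: S_def)
  define v where "v = Min S"
  have vv: "v_fun A x y = v" unfolding v_def S_def v_fun_def by simp
  have x0: "\<forall>i. x i \<ge> 0" and x1: "(\<Sum>i\<in>UNIV. (x i)\<^sup>2) = 1" using x by (auto simp: sphere_plus_def)
  have each: "v * (x i)\<^sup>2 \<le> x i * bq_g A x y i" for i
  proof (cases "x i > 0")
    case True
    hence "bq_g A x y i / x i \<in> S" unfolding S_def by blast
    hence "v \<le> bq_g A x y i / x i" unfolding v_def using fin by (rule Min_le[rotated])
    hence "v * x i \<le> bq_g A x y i" using True by (simp add: le_divide_eq)
    hence "(v * x i) * x i \<le> bq_g A x y i * x i" using True by (simp add: mult_right_mono)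
    thus ?thesis by (simp add: power2_eq_square algebra_simps)
  next
    case False
    moreover have "x i \<ge> 0" using x0 by simp
    ultimately have "x i = 0" by linarith
    thus ?thesis by simp
  qed
  have "v = v * (\<Sum>i\<in>UNIV. (x i)\<^sup>2)" using x1 by simp
  also have "\<dots> = (\<Sum>i\<in>UNIV. v * (x i)\<^sup>2)" by (simp add: sum_distrib_left)
  also have "\<dots> \<le> (\<Sum>i\<in>UNIV. x i * bq_g A x y i)" by (rule sum_mono) (rule each)
  also have "\<dots> = T A x y x y" by (rule xgx)
  finally show ?thesis using vv by simp
qed

theorem theorem5p1:
  fixes A :: "('m::finite, 'n::finite) bqtensor"
  assumes "CARD('m) \<ge> 2" and "CARD('n) \<ge> 2"
    and "nonneg_bq A"
  shows "rho_star A = lambda_max A \<and> lambda_max A = rho_M A \<and>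
         (\<exists>x\<in>sphere_plus. \<exists>y\<in>sphere_plus. v_fun A x y = rho_star A)"
proof -
  note nn = assms(3)
  obtain x0 :: "'m \<Rightarrow> real" and y0 :: "'n \<Rightarrow> real" where x0: "x0 \<in> U" and y0: "y0 \<in> U"
    and mx: "\<forall>x\<in>U. \<forall>y\<in>U. T A x y x y \<le> T A x0 y0 x0 y0"
    using exists_max[of A] by blast
  define L where "L = T A x0 y0 x0 y0"
  have M: "\<forall>x\<in>U. \<forall>y\<in>U. T A x y x y \<le> L" using mx L_def by simp
  define xa where "xa = (\<lambda>k. \<bar>x0 k\<bar>)"
  define ya where "ya = (\<lambda>k. \<bar>y0 k\<bar>)"
  have xaU: "xa \<in> U" unfolding xa_def using abs_U[OF x0] .
  have yaU: "ya \<in> U" unfolding ya_def using abs_U[OF y0] .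
  have "\<bar>L\<bar> \<le> T A xa ya xa ya" unfolding L_def xa_def ya_def by (rule T_abs[OF nn])
  moreover have "T A xa ya xa ya \<le> L" using M xaU yaU by blast
  ultimately have E: "T A xa ya xa ya = L" and L0: "L \<ge> 0" by linarith+
  have Mx: "\<And>x'. T A x' ya x' ya \<le> L * (\<Sum>i\<in>UNIV. (x' i)\<^sup>2)" using hom_x[OF M yaU] .
  have My: "\<And>y'. T A xa y' xa y' \<le> L * (\<Sum>i\<in>UNIV. (y' i)\<^sup>2)" using hom_y[OF M xaU] .
  have geq: "\<And>i. bq_g A xa ya i = L * xa i" using eig_g[OF Mx xaU E] .
  have heq: "\<And>j. bq_h A xa ya j = L * ya j" using eig_h[OF My yaU E] .
  have eigL: "is_M_eigenvalue A L"
    unfolding is_M_eigenvalue_def using xaU yaU geq heq by (auto simp: U_def)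
  have bound: "\<bar>l\<bar> \<le> L" if el: "is_M_eigenvalue A l" for l
  proof -
    obtain x y where xU: "(\<Sum>i\<in>UNIV. (x i)\<^sup>2) = 1" and yU: "(\<Sum>j\<in>UNIV. (y j)\<^sup>2) = 1"
      and g: "\<forall>i. bq_g A x y i = l * x i" and "\<forall>j. bq_h A x y j = l * y j"
      using el unfolding is_M_eigenvalue_def by blast
    have "T A x y x y = (\<Sum>i\<in>UNIV. x i * bq_g A x y i)" by (rule xgx[symmetric])
    also have "\<dots> = l * (\<Sum>i\<in>UNIV. (x i)\<^sup>2)" using g by (simp add: sum_distrib_left power2_eq_square algebra_simps)
    finally have lT: "l = T A x y x y" using xU by simp
    have "\<bar>T A x y x y\<bar> \<le> T A (\<lambda>k. \<bar>x k\<bar>) (\<lambda>k. \<bar>y k\<bar>) (\<lambda>k. \<bar>x k\<bar>) (\<lambda>k. \<bar>y k\<bar>)" by (rule T_abs[OF nn])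
    also have "\<dots> \<le> L" using M abs_U[of x] abs_U[of y] xU yU by (simp add: U_def)
    finally show ?thesis using lT by simp
  qed
  have lm: "lambda_max A = L"
    unfolding lambda_max_def
  proof (rule Greatest_equality)
    show "is_M_eigenvalue A L" by (rule eigL)
    fix l assume "is_M_eigenvalue A l" thus "l \<le> L" using bound by fastforce
  qed
  have rm: "rho_M A = L"
    unfolding rho_M_def
  proof (rule Greatest_equality)
    show "\<exists>l. is_M_eigenvalue A l \<and> L = \<bar>l\<bar>" using eigL L0 by auto
    fix r assume "\<exists>l. is_M_eigenvalue A l \<and> r = \<bar>l\<bar>" thus "r \<le> L" using bound by blast
  qed
  have xaP: "xa \<in> sphere_plus" using xaU unfolding xa_def sphere_plus_def U_def by auto
  have yaP: "ya \<in> sphere_plus" using yaU unfolding ya_def sphere_plus_def U_def by auto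
  have vL: "v_fun A xa ya = L"
  proof -
    obtain i where i: "xa i > 0"
    proof (rule ccontr)
      assume "\<not> thesis"
      hence "\<forall>i. xa i = 0" using that unfolding xa_def by (metis abs_ge_zero less_eq_real_def)
      thus False using xaU by (simp add: U_def)
    qed
    have s1: "{bq_g A xa ya i / xa i | i. xa i > 0} \<union> {bq_h A xa ya j / ya j | j. ya j > 0} \<subseteq> {L}"
      using geq heq by auto
    have "bq_g A xa ya i / xa i = L" using i geq[of i] by simp
    hence "L \<in> {bq_g A xa ya i / xa i | i. xa i > 0}" using i by blast
    hence "{bq_g A xa ya i / xa i | i. xa i > 0} \<union> {bq_h A xa ya j / ya j | j. ya j > 0} = {L}"
      using s1 by blast
    thus ?thesis unfolding v_fun_def by simp
  qed
  have rs: "rho_star A = L"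
    unfolding rho_star_def
  proof (rule cSup_eq_maximum)
    show "L \<in> (\<lambda>p. v_fun A (fst p) (snd p)) ` (sphere_plus \<times> sphere_plus)"
      using vL xaP yaP by force
    fix z assume "z \<in> (\<lambda>p. v_fun A (fst p) (snd p)) ` (sphere_plus \<times> sphere_plus)"
    then obtain x y where xy: "x \<in> sphere_plus" "y \<in> sphere_plus" and z: "z = v_fun A x y" by auto
    have xU: "x \<in> U" using subsetD[OF sphere_plus_U xy(1)] .
    have yU: "y \<in> U" using subsetD[OF sphere_plus_U xy(2)] .
    have "z \<le> T A x y x y" using v_le[OF xy] z by simp
    also have "\<dots> \<le> L" using M xU yU by simp
    finally show "z \<le> L" .
  qed
  show ?thesis using lm rm rs vL xaP yaP by auto
qed

end
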